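(* Let $G=([n],E)$ be a DAG all of whose edges $(u,v)$ satisfy $u<v$ that is a $\delta$-local expander, let $S\subseteq[n]$, and let $x<y$ in $[n]$ both be $\gamma$-good under $S$. If $\delta<\min\{\gamma/2,1/4\}$, then there is a directed path from $x$ to $y$ in $G-S$.
   Context: For $x\in[n]$ and integer $r>0$ let $I_r(x)=\{x-r+1,\ldots,x\}\cap[n]$ and $I^*_r(x)=\{x+1,\ldots,x+r\}\cap[n]$. A DAG $G=([n],E)$ is a $\delta$-local expander if for every $x\in[n]$, every integer $r\ge1$ with $r\le x$ and $r\le n-x$, and every $A\subseteq I_r(x)$, $B\subseteq I^*_r(x)$ with $|A|\ge\delta r$ and $|B|\ge\delta r$, there is an edge $(a,b)\in E$ with $a\in A$, $b\in B$. For $S\subseteq[n]$ and $\gamma>0$, a node $x\in[n]$ is $\gamma$-good under $S$ if for every integer $r>0$, $|I_r(x)\setminus S|\ge\gamma|I_r(x)|$ and $|I^*_r(x)\setminus S|\ge\gamma|I^*_r(x)|$. $G-S$ is $G$ with the nodes of $S$ and incident edges removed. *)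

theory Defs
  imports Complex_Main
begin

definition nodes :: "nat \<Rightarrow> nat set" where
  "nodes n = {1..n}"

text \<open>I_r(x) = {x-r+1,...,x} \<inter> [n] (written without natural subtraction).\<close>
definition Iback :: "nat \<Rightarrow> nat \<Rightarrow> nat \<Rightarrow> nat set" where
  "Iback n r x = {k \<in> nodes n. x < k + r \<and> k \<le> x}"

definition Ifwd :: "nat \<Rightarrow> nat \<Rightarrow> nat \<Rightarrow> nat set" where
  "Ifwd n r x = {k \<in> nodes n. x < k \<and> k \<le> x + r}"

definition local_expander :: "nat \<Rightarrow> (nat \<times> nat) set \<Rightarrow> real \<Rightarrow> bool" where
  "local_expander n E \<delta> \<longleftrightarrow>
     (\<forall>x \<in> nodes n. \<forall>r::nat. 1 \<le> r \<and> r \<le> x \<and> r \<le> n - x \<longrightarrow>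
        (\<forall>A B. A \<subseteq> Iback n r x \<and> B \<subseteq> Ifwd n r x \<and>
               real (card A) \<ge> \<delta> * real r \<and> real (card B) \<ge> \<delta> * real r \<longrightarrow>
               (\<exists>a \<in> A. \<exists>b \<in> B. (a, b) \<in> E)))"

definition good :: "nat \<Rightarrow> nat set \<Rightarrow> real \<Rightarrow> nat \<Rightarrow> bool" where
  "good n S \<gamma> x \<longleftrightarrow>
     (\<forall>r::nat. r > 0 \<longrightarrow>
        real (card (Iback n r x - S)) \<ge> \<gamma> * real (card (Iback n r x)) \<and>
        real (card (Ifwd n r x - S)) \<ge> \<gamma> * real (card (Ifwd n r x)))"

definition path_avoiding :: "(nat \<times> nat) set \<Rightarrow> nat set \<Rightarrow> nat \<Rightarrow> nat \<Rightarrow> bool" where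
  "path_avoiding E S x y \<longleftrightarrow>
     (\<exists>p. p \<noteq> [] \<and> hd p = x \<and> last p = y \<and> set p \<inter> S = {} \<and>
          (\<forall>i. Suc i < length p \<longrightarrow> (p ! i, p ! Suc i) \<in> E))"

end

theory Submission
  imports Defs
begin

lemma int_step:
  fixes p q s :: nat and \<delta> :: real
  assumes a1: "real p \<le> \<delta> * s" and a2: "real q < \<delta> * (s + 1)" and a3: "\<delta> < 1/2"
  shows "real (p + q) \<le> 2 * \<delta> * s"
proof -
  define k where "k = \<lfloor>\<delta> * s\<rfloor>"
  have f1: "real_of_int k \<le> \<delta> * s" unfolding k_def by simp
  have f2: "\<delta> * s < real_of_int k + 1" unfolding k_def by simp
  have pk: "int p \<le> k" using a1 unfolding k_def by (simp add: le_floor_iff)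
  have a2': "real q < \<delta> * s + \<delta>" using a2 by (simp add: algebra_simps)
  have "real q < real_of_int (k + 2)" using a2' f2 a3 by simp
  hence "real_of_int (int q) < real_of_int (k + 2)" by simp
  hence qk: "int q \<le> k + 1" by linarith
  show ?thesis
  proof (cases "int q \<le> k")
    case True
    hence "int (p+q) \<le> 2 * k" using pk by simp
    hence "real_of_int (int (p+q)) \<le> real_of_int (2 * k)" by (simp only: of_int_le_iff)
    hence "real (p+q) \<le> 2 * real_of_int k" by simp
    then show ?thesis using f1 by simp
  next
    case False
    hence q: "int q = k + 1" using qk by simp
    hence "real q = real_of_int k + 1" by (metis of_int_of_nat_eq of_int_add of_int_1)
    hence "real_of_int k + 1 - \<delta> < \<delta> * s" using a2' by linarith
    hence "2 * real_of_int k + 1 < 2 * (\<delta> * s)" using a3 by linarith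
    moreover have "int (p + q) \<le> 2 * k + 1" using pk q by simp
    hence "real_of_int (int (p+q)) \<le> real_of_int (2 * k + 1)" by (simp only: of_int_le_iff)
    hence "real (p + q) \<le> 2 * real_of_int k + 1" by simp
    ultimately show ?thesis by simp
  qed
qed

lemma card_split3:
  fixes X :: "nat set"
  assumes "a \<le> b" "b \<le> c"
  shows "card (X \<inter> {a<..c}) = card (X \<inter> {a<..b}) + card (X \<inter> {b<..c})"
proof -
  have "X \<inter> {a<..c} = (X \<inter> {a<..b}) \<union> (X \<inter> {b<..c})" using assms by auto
  moreover have "(X \<inter> {a<..b}) \<inter> (X \<inter> {b<..c}) = {}" by auto
  ultimately show ?thesis by (simp add: card_Un_disjoint)
qed

lemma card_ins_x:
  fixes R :: "nat set"
  assumes "x \<in> R" "1 \<le> x" "x \<le> z"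
  shows "card (R \<inter> {x - 1<..z}) = card (R \<inter> {x<..z}) + 1"
proof -
  have "R \<inter> {x - 1<..z} = insert x (R \<inter> {x<..z})" using assms by auto
  moreover have "x \<notin> R \<inter> {x<..z}" by auto
  ultimately show ?thesis by simp
qed

lemma fwd:
  fixes R D S :: "nat set" and n x z :: nat and \<delta> \<gamma> :: real
  assumes W: "\<And>c r. 1 \<le> r \<Longrightarrow> r \<le> c \<Longrightarrow> c + r \<le> n \<Longrightarrow>
                 \<delta> * r \<le> card (R \<inter> {c-r<..c}) \<Longrightarrow> \<delta> * r \<le> card (D \<inter> {c<..c+r}) \<Longrightarrow> False"
    and part: "\<And>a b. b \<le> n \<Longrightarrow> card (R \<inter> {a<..b}) + card (D \<inter> {a<..b}) = card ({a<..b} - S)"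
    and xR: "x \<in> R" and x1: "1 \<le> x"
    and gx: "\<And>z. x \<le> z \<Longrightarrow> z \<le> n \<Longrightarrow> \<gamma> * (real z - real x) \<le> card ({x<..z} - S)"
    and gd: "2 * \<delta> \<le> \<gamma>" and d1: "\<delta> \<le> 1" and d0: "0 < \<delta>"
  shows "x \<le> z \<Longrightarrow> z \<le> n \<Longrightarrow> card (D \<inter> {x<..z}) \<le> \<delta> * (real z - real x)"
proof (induction "z - x" arbitrary: z rule: less_induct)
  case less
  show ?case
  proof (cases "z = x")
    case True
    then show ?thesis by simp
  next
    case False
    hence zx: "x < z" using less.prems by simp
    obtain k where kd: "k = z - x" by simp
    have k1: "1 \<le> k" using zx kd by simp
    define m where "m = (k + 1) div 2"
    have m1: "1 \<le> m" using k1 unfolding m_def by simp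
    have mc0: "k = 2*m - 1 \<or> k = 2*m" unfolding m_def by presburger
    hence mc: "z - x = 2*m - 1 \<or> z - x = 2*m" using kd by simp
    from mc show ?thesis
    proof
      assume e: "z - x = 2*m - 1"
      define z' where "z' = x + m - 1"
      have z'z: "z' + m = z" and xz': "x \<le> z'" and z'lt: "z' - x < z - x" and z'n: "z' \<le> n"
        using e m1 zx less.prems unfolding z'_def by auto
      have IH: "real (card (D \<inter> {x<..z'})) \<le> \<delta> * (real z' - real x)"
        using less.hyps[OF z'lt xz' z'n] .
      have p1: "card (R \<inter> {x<..z'}) + card (D \<inter> {x<..z'}) = card ({x<..z'} - S)" using part z'n by simp
      hence p1r: "real (card (R \<inter> {x<..z'})) + real (card (D \<inter> {x<..z'})) = real (card ({x<..z'} - S))"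
        by (metis of_nat_add)
      have g1: "\<gamma> * (real z' - real x) \<le> card ({x<..z'} - S)" using gx xz' z'n by simp
      have zm: "real z' - real x = real m - 1" using xz' m1 unfolding z'_def by simp
      have zmx: "z' - m = x - 1" unfolding z'_def using m1 by simp
      have cR: "card (R \<inter> {z' - m<..z'}) = card (R \<inter> {x<..z'}) + 1"
        unfolding zmx using card_ins_x[OF xR x1 xz'] .
      have IH': "real (card (D \<inter> {x<..z'})) \<le> \<delta> * (real m - 1)" using IH zm by simp
      have g1': "\<gamma> * (real m - 1) \<le> real (card ({x<..z'} - S))" using g1 zm by simp
      have mm: "\<gamma> * (real m - 1) \<ge> 2 * \<delta> * (real m - 1)"
        using gd m1 by (intro mult_right_mono) auto
      have "\<delta> * real m = \<delta> * (real m - 1) + \<delta>" by (simp add: algebra_simps)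
      hence Ad: "\<delta> * m \<le> card (R \<inter> {z' - m<..z'})"
        using cR p1r IH' g1' mm d1 by simp
      have mz': "m \<le> z'" and zn: "z' + m \<le> n" using z'z less.prems x1 m1 unfolding z'_def by auto
      have B: "card (D \<inter> {z'<..z'+m}) < \<delta> * m"
      proof (rule ccontr)
        assume "\<not> card (D \<inter> {z'<..z'+m}) < \<delta> * m"
        hence "\<delta> * m \<le> card (D \<inter> {z'<..z'+m})" by simp
        thus False using W[OF m1 mz' zn Ad] by simp
      qed
      have "card (D \<inter> {x<..z}) = card (D \<inter> {x<..z'}) + card (D \<inter> {z'<..z})"
        using card_split3[of x z' z D] xz' z'z by simp
      hence "real (card (D \<inter> {x<..z})) = real (card (D \<inter> {x<..z'})) + real (card (D \<inter> {z'<..z}))"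
        by (metis of_nat_add)
      hence c1: "real (card (D \<inter> {x<..z})) < \<delta> * (real m - 1) + \<delta> * m"
        using IH' B z'z by simp
      have "real z - real x = 2 * real m - 1" using e m1 zx by linarith
      hence "\<delta> * (real z - real x) = \<delta> * (2 * real m - 1)" by simp
      also have "\<dots> = \<delta> * (real m - 1) + \<delta> * m" by (simp add: algebra_simps)
      finally have "\<delta> * (real z - real x) = \<delta> * (real m - 1) + \<delta> * m" .
      then show ?thesis using c1 by linarith
    next
      assume e: "z - x = 2*m"
      define z' where "z' = x + m"
      have z'z: "z' + m = z" and xz': "x \<le> z'" and z'lt: "z' - x < z - x" and z'n: "z' \<le> n"
        using e m1 zx less.prems unfolding z'_def by auto
      have IH: "real (card (D \<inter> {x<..z'})) \<le> \<delta> * (real z' - real x)"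
        using less.hyps[OF z'lt xz' z'n] .
      have p1: "card (R \<inter> {x<..z'}) + card (D \<inter> {x<..z'}) = card ({x<..z'} - S)" using part z'n by simp
      hence p1r: "real (card (R \<inter> {x<..z'})) + real (card (D \<inter> {x<..z'})) = real (card ({x<..z'} - S))"
        by (metis of_nat_add)
      have g1: "\<gamma> * (real z' - real x) \<le> card ({x<..z'} - S)" using gx xz' z'n by simp
      have zm: "real z' - real x = real m" unfolding z'_def by simp
      have zmx: "z' - m = x" unfolding z'_def by simp
      have IH': "real (card (D \<inter> {x<..z'})) \<le> \<delta> * real m" using IH zm by simp
      have g1': "\<gamma> * real m \<le> real (card ({x<..z'} - S))" using g1 zm by simp
      have mm: "\<gamma> * real m \<ge> 2 * \<delta> * real m"
        using gd m1 by (intro mult_right_mono) auto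
      have Ad: "\<delta> * m \<le> card (R \<inter> {z' - m<..z'})"
        unfolding zmx using p1r IH' g1' mm by simp
      have mz': "m \<le> z'" and zn: "z' + m \<le> n" using z'z less.prems x1 m1 unfolding z'_def by auto
      have B: "card (D \<inter> {z'<..z'+m}) < \<delta> * m"
      proof (rule ccontr)
        assume "\<not> card (D \<inter> {z'<..z'+m}) < \<delta> * m"
        hence "\<delta> * m \<le> card (D \<inter> {z'<..z'+m})" by simp
        thus False using W[OF m1 mz' zn Ad] by simp
      qed
      have "card (D \<inter> {x<..z}) = card (D \<inter> {x<..z'}) + card (D \<inter> {z'<..z})"
        using card_split3[of x z' z D] xz' z'z by simp
      hence "real (card (D \<inter> {x<..z})) = real (card (D \<inter> {x<..z'})) + real (card (D \<inter> {z'<..z}))"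
        by (metis of_nat_add)
      hence c1: "real (card (D \<inter> {x<..z})) < \<delta> * real m + \<delta> * m"
        using IH' B z'z by simp
      have "real z - real x = 2 * real m" using e m1 zx by linarith
      hence "\<delta> * (real z - real x) = \<delta> * (2 * real m)" by simp
      also have "\<dots> = \<delta> * real m + \<delta> * m" by (simp add: algebra_simps)
      finally have "\<delta> * (real z - real x) = \<delta> * real m + \<delta> * m" .
      then show ?thesis using c1 by linarith
    qed
  qed
qed

lemma bwd:
  fixes R D S :: "nat set" and n y t :: nat and \<delta> \<gamma> :: real
  assumes W: "\<And>c r. 1 \<le> r \<Longrightarrow> r \<le> c \<Longrightarrow> c + r \<le> n \<Longrightarrow>
                 \<delta> * r \<le> card (R \<inter> {c-r<..c}) \<Longrightarrow> \<delta> * r \<le> card (D \<inter> {c<..c+r}) \<Longrightarrow> False"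
    and part: "\<And>a b. b \<le> n \<Longrightarrow> card (R \<inter> {a<..b}) + card (D \<inter> {a<..b}) = card ({a<..b} - S)"
    and yR: "y \<notin> R" and yn: "y \<le> n"
    and gy: "\<And>t. 1 \<le> t \<Longrightarrow> t \<le> y \<Longrightarrow> \<gamma> * real t \<le> card ({y-t<..y} - S)"
    and gd: "2 * \<delta> \<le> \<gamma>" and d2: "\<delta> < 1/2" and d0: "0 < \<delta>"
  shows "1 \<le> t \<Longrightarrow> t + 1 \<le> y \<Longrightarrow> card (R \<inter> {y-t<..y}) \<le> \<delta> * (real t - 1)"
proof (induction t rule: less_induct)
  case (less t)
  have Dlow: "\<delta> * real u \<le> card (D \<inter> {y-u<..y})"
    if u1: "1 \<le> u" and uy: "u + 1 \<le> y" and ih: "real (card (R \<inter> {y-u<..y})) \<le> \<delta> * (real u - 1)" for u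
  proof -
    have p1: "card (R \<inter> {y-u<..y}) + card (D \<inter> {y-u<..y}) = card ({y-u<..y} - S)" using part yn by simp
    hence p1r: "real (card (R \<inter> {y-u<..y})) + real (card (D \<inter> {y-u<..y})) = real (card ({y-u<..y} - S))"
      by (metis of_nat_add)
    have g: "\<gamma> * real u \<le> card ({y-u<..y} - S)" using gy u1 uy by simp
    have mm: "\<gamma> * real u \<ge> 2 * \<delta> * real u" using gd by (intro mult_right_mono) auto
    have "\<delta> * (real u - 1) = \<delta> * real u - \<delta>" by (simp add: algebra_simps)
    thus ?thesis using p1r g mm ih d0 by linarith
  qed
  show ?case
  proof (cases "t = 1")
    case True
    have iv: "{y-t<..y} = {y}" using True less.prems by force
    have "R \<inter> {y-t<..y} = {}" unfolding iv using yR by auto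
    then show ?thesis using True by simp
  next
    case False
    hence t2: "2 \<le> t" using less.prems by simp
    define s where "s = t div 2"
    have s1: "1 \<le> s" using t2 unfolding s_def by simp
    have par: "t = 2*s \<or> t = 2*s+1" unfolding s_def by presburger
    from par show ?thesis
    proof
      assume e: "t = 2*s"
      have slt: "s < t" and sy: "s + 1 \<le> y" using e s1 less.prems by auto
      have IH: "real (card (R \<inter> {y-s<..y})) \<le> \<delta> * (real s - 1)" using less.IH[OF slt s1 sy] .
      have Bd: "\<delta> * real s \<le> card (D \<inter> {(y-s)<..(y-s)+s})" using Dlow[OF s1 sy IH] sy by simp
      have sc: "s \<le> y - s" and cn: "(y - s) + s \<le> n" using e less.prems yn by auto
      have A: "card (R \<inter> {(y-s)-s<..y-s}) < \<delta> * real s"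
      proof (rule ccontr)
        assume "\<not> card (R \<inter> {(y-s)-s<..y-s}) < \<delta> * real s"
        hence "\<delta> * real s \<le> card (R \<inter> {(y-s)-s<..y-s})" by simp
        thus False using W[OF s1 sc cn _ Bd] by simp
      qed
      have ys: "(y - s) - s = y - t" using e by simp
      have "card (R \<inter> {y-t<..y}) = card (R \<inter> {y-t<..y-s}) + card (R \<inter> {y-s<..y})"
        using card_split3[of "y-t" "y-s" y R] e by simp
      hence "real (card (R \<inter> {y-t<..y})) = real (card (R \<inter> {y-t<..y-s})) + real (card (R \<inter> {y-s<..y}))"
        by (metis of_nat_add)
      hence c1: "real (card (R \<inter> {y-t<..y})) < \<delta> * real s + \<delta> * (real s - 1)"
        using A IH ys by simp
      have "\<delta> * (real t - 1) = \<delta> * real s + \<delta> * (real s - 1)" using e by (simp add: algebra_simps)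
      then show ?thesis using c1 by linarith
    next
      assume e: "t = 2*s+1"
      define u where "u = s + 1"
      have ult: "u < t" and u1: "1 \<le> u" and uy: "u + 1 \<le> y" using e s1 less.prems unfolding u_def by auto
      have IH: "real (card (R \<inter> {y-u<..y})) \<le> \<delta> * (real u - 1)" using less.IH[OF ult u1 uy] .
      have Bd: "\<delta> * real u \<le> card (D \<inter> {(y-u)<..(y-u)+u})" using Dlow[OF u1 uy IH] uy by simp
      have sc: "u \<le> y - u" and cn: "(y - u) + u \<le> n" using e less.prems yn unfolding u_def by auto
      have A: "card (R \<inter> {(y-u)-u<..y-u}) < \<delta> * real u"
      proof (rule ccontr)
        assume "\<not> card (R \<inter> {(y-u)-u<..y-u}) < \<delta> * real u"
        hence "\<delta> * real u \<le> card (R \<inter> {(y-u)-u<..y-u})" by simp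
        thus False using W[OF u1 sc cn _ Bd] by simp
      qed
      have sub: "R \<inter> {y-t<..y-u} \<subseteq> R \<inter> {(y-u)-u<..y-u}" using e unfolding u_def by auto
      have "card (R \<inter> {y-t<..y-u}) \<le> card (R \<inter> {(y-u)-u<..y-u})"
        by (rule card_mono[OF _ sub]) simp
      hence A': "real (card (R \<inter> {y-t<..y-u})) < \<delta> * real (s + 1)" using A unfolding u_def by simp
      have IH': "real (card (R \<inter> {y-u<..y})) \<le> \<delta> * real s" using IH unfolding u_def by simp
      have "card (R \<inter> {y-t<..y}) = card (R \<inter> {y-u<..y}) + card (R \<inter> {y-t<..y-u})"
        using card_split3[of "y-t" "y-u" y R] e unfolding u_def by simp
      moreover have "real (card (R \<inter> {y-u<..y}) + card (R \<inter> {y-t<..y-u})) \<le> 2 * \<delta> * s"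
        using int_step[OF IH' A' d2] .
      moreover have "real t - 1 = 2 * real s" using e by simp
      hence "\<delta> * (real t - 1) = 2 * \<delta> * s" by simp
      ultimately show ?thesis by (metis of_nat_add)
    qed
  qed
qed

theorem mainTheorem11:
  fixes n :: nat and E :: "(nat \<times> nat) set" and S :: "nat set"
    and x y :: nat and \<delta> \<gamma> :: real
  assumes edges: "E \<subseteq> nodes n \<times> nodes n"
    and forward: "\<forall>(u, v) \<in> E. u < v"
    and expander: "local_expander n E \<delta>"
    and S_sub: "S \<subseteq> nodes n"
    and x_in: "x \<in> nodes n" and y_in: "y \<in> nodes n" and xy: "x < y"
    and x_good: "good n S \<gamma> x" and y_good: "good n S \<gamma> y"
    and \<gamma>_pos: "\<gamma> > 0"
    and \<delta>_bound: "\<delta> < min (\<gamma> / 2) (1 / 4)"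
  shows "path_avoiding E S x y"
proof -
  define R where "R = {v. path_avoiding E S x v}"
  define D where "D = nodes n - S - R"
  have x1: "1 \<le> x" and xn: "x \<le> n" using x_in by (auto simp: nodes_def)
  have y1: "1 \<le> y" and yn: "y \<le> n" using y_in by (auto simp: nodes_def)
  have gd: "2 * \<delta> \<le> \<gamma>" and d2: "\<delta> < 1/2" and d1: "\<delta> \<le> 1" using \<delta>_bound by auto
  have xS: "x \<notin> S"
  proof
    assume xS: "x \<in> S"
    have "Iback n 1 x = {x}" using x_in by (auto simp: Iback_def nodes_def)
    have gg: "\<forall>r::nat. r > 0 \<longrightarrow> real (card (Iback n r x - S)) \<ge> \<gamma> * real (card (Iback n r x)) \<and>
        real (card (Ifwd n r x - S)) \<ge> \<gamma> * real (card (Ifwd n r x))" using x_good unfolding good_def .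
    have "real (card (Iback n 1 x - S)) \<ge> \<gamma> * real (card (Iback n 1 x))" using gg[rule_format, of 1] by simp
    hence "\<gamma> * real (card {x}) \<le> real (card ({x} - S))" using \<open>Iback n 1 x = {x}\<close> by simp
    thus False using xS \<gamma>_pos by simp
  qed
  have xR: "x \<in> R" unfolding R_def path_avoiding_def
    using xS by (intro CollectI exI[of _ "[x]"]) auto
  have RS: "v \<notin> S" if vR: "v \<in> R" for v
  proof -
    obtain p where p: "p \<noteq> []" "last p = v" "set p \<inter> S = {}"
      using vR unfolding R_def path_avoiding_def by blast
    have "v \<in> set p" using p(1,2) last_in_set by blast
    thus ?thesis using p(3) by blast
  qed
  have Rn: "v \<in> R \<Longrightarrow> v \<in> nodes n" for v
  proof -
    assume "v \<in> R"
    then obtain p where p: "p \<noteq> []" "hd p = x" "last p = v"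
      and pe: "\<forall>i. Suc i < length p \<longrightarrow> (p ! i, p ! Suc i) \<in> E"
      unfolding R_def path_avoiding_def by blast
    show "v \<in> nodes n"
    proof (cases "length p = 1")
      case True
      then obtain a where "p = [a]" using p(1) by (cases p) auto
      then show ?thesis using p x_in by simp
    next
      case False
      have "length p \<noteq> 0" using p(1) by simp
      hence lp: "2 \<le> length p" using False by linarith
      hence l2: "Suc (length p - 2) < length p" and l3: "Suc (length p - 2) = length p - 1" by auto
      have "(p ! (length p - 2), p ! Suc (length p - 2)) \<in> E" using pe l2 by blast
      hence "(p ! (length p - 2), p ! (length p - 1)) \<in> E" unfolding l3 .
      moreover have "last p = p ! (length p - 1)" using p(1) by (simp add: last_conv_nth)
      ultimately show ?thesis using edges p(3) by auto
    qed
  qed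
  have clos: "a \<in> R \<Longrightarrow> (a, b) \<in> E \<Longrightarrow> b \<notin> S \<Longrightarrow> b \<in> R" for a b
  proof -
    assume aR: "a \<in> R" and ab: "(a, b) \<in> E" and bS: "b \<notin> S"
    then obtain p where p: "p \<noteq> []" "hd p = x" "last p = a" "set p \<inter> S = {}"
      and pe: "\<forall>i. Suc i < length p \<longrightarrow> (p ! i, p ! Suc i) \<in> E"
      unfolding R_def path_avoiding_def by blast
    have e1: "\<forall>i. Suc i < length (p @ [b]) \<longrightarrow> ((p @ [b]) ! i, (p @ [b]) ! Suc i) \<in> E"
    proof (intro allI impI)
      fix i assume i: "Suc i < length (p @ [b])"
      show "((p @ [b]) ! i, (p @ [b]) ! Suc i) \<in> E"
      proof (cases "Suc i < length p")
        case True
        then show ?thesis using pe by (simp add: nth_append)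
      next
        case False
        hence ii: "Suc i = length p" using i by simp
        have ii2: "i = length p - 1" using ii by simp
        hence "(p @ [b]) ! i = last p" using p(1) by (simp add: nth_append last_conv_nth)
        moreover have "(p @ [b]) ! Suc i = b" using ii by (simp add: nth_append)
        ultimately show ?thesis using ab p(3) by simp
      qed
    qed
    have e2: "hd (p @ [b]) = x" using p by simp
    have e3: "set (p @ [b]) \<inter> S = {}" using p(4) bS by auto
    have e4: "last (p @ [b]) = b" by simp
    have e5: "p @ [b] \<noteq> []" by simp
    show "b \<in> R" unfolding R_def path_avoiding_def
      by (intro CollectI exI[of _ "p @ [b]"] conjI e1 e2 e3 e4 e5)
  qed
  have part: "card (R \<inter> {a<..b}) + card (D \<inter> {a<..b}) = card ({a<..b} - S)" if "b \<le> n" for a b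
  proof -
    have "{a<..b} - S = (R \<inter> {a<..b}) \<union> (D \<inter> {a<..b})"
      using that RS Rn unfolding D_def by (auto simp: nodes_def)
    moreover have "(R \<inter> {a<..b}) \<inter> (D \<inter> {a<..b}) = {}" unfolding D_def by auto
    ultimately show ?thesis by (simp add: card_Un_disjoint)
  qed
  have W: False if r1: "1 \<le> r" and rc: "r \<le> c" and cn: "c + r \<le> n"
    and Ad: "\<delta> * r \<le> card (R \<inter> {c-r<..c})" and Bd: "\<delta> * r \<le> card (D \<inter> {c<..c+r})" for c r
  proof -
    have cin: "c \<in> nodes n" using r1 rc cn by (auto simp: nodes_def)
    have L: "\<forall>x \<in> nodes n. \<forall>r::nat. 1 \<le> r \<and> r \<le> x \<and> r \<le> n - x \<longrightarrow>
        (\<forall>A B. A \<subseteq> Iback n r x \<and> B \<subseteq> Ifwd n r x \<and>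
               real (card A) \<ge> \<delta> * real r \<and> real (card B) \<ge> \<delta> * real r \<longrightarrow>
               (\<exists>a \<in> A. \<exists>b \<in> B. (a, b) \<in> E))"
      using expander unfolding local_expander_def .
    have L1: "\<forall>r::nat. 1 \<le> r \<and> r \<le> c \<and> r \<le> n - c \<longrightarrow>
        (\<forall>A B. A \<subseteq> Iback n r c \<and> B \<subseteq> Ifwd n r c \<and>
               real (card A) \<ge> \<delta> * real r \<and> real (card B) \<ge> \<delta> * real r \<longrightarrow>
               (\<exists>a \<in> A. \<exists>b \<in> B. (a, b) \<in> E))" using bspec[OF L cin] .
    have rr: "1 \<le> r \<and> r \<le> c \<and> r \<le> n - c" using r1 rc cn by simp
    have L2: "\<forall>A B. A \<subseteq> Iback n r c \<and> B \<subseteq> Ifwd n r c \<and>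
               real (card A) \<ge> \<delta> * real r \<and> real (card B) \<ge> \<delta> * real r \<longrightarrow>
               (\<exists>a \<in> A. \<exists>b \<in> B. (a, b) \<in> E)" using mp[OF spec[OF L1, of r] rr] .
    have s1: "R \<inter> {c-r<..c} \<subseteq> Iback n r c" using rc cn by (auto simp: Iback_def nodes_def)
    have s2: "D \<inter> {c<..c+r} \<subseteq> Ifwd n r c" using cn by (auto simp: Ifwd_def nodes_def)
    have "\<exists>a \<in> R \<inter> {c-r<..c}. \<exists>b \<in> D \<inter> {c<..c+r}. (a, b) \<in> E"
      using mp[OF spec[OF spec[OF L2, of "R \<inter> {c-r<..c}"], of "D \<inter> {c<..c+r}"]] s1 s2 Ad Bd by simp
    then obtain a b where "a \<in> R" "b \<in> D" "(a, b) \<in> E" by blast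
    thus False using clos unfolding D_def by auto
  qed
  have d0: "0 < \<delta>"
  proof (rule ccontr)
    assume "\<not> 0 < \<delta>"
    hence "\<delta> * real (1::nat) \<le> card (R \<inter> {1-1<..1})" "\<delta> * real (1::nat) \<le> card (D \<inter> {1<..1+1})" by auto
    moreover have "(1::nat) + 1 \<le> n" using x1 xy yn by simp
    ultimately show False using W[of 1 1] by simp
  qed
  have gx: "\<gamma> * (real z - real x) \<le> card ({x<..z} - S)" if "x \<le> z" "z \<le> n" for z
  proof (cases "z = x")
    case True then show ?thesis by simp
  next
    case False
    have iv: "Ifwd n (z - x) x = {x<..z}" using that False by (auto simp: Ifwd_def nodes_def)
    have gg: "\<forall>r::nat. r > 0 \<longrightarrow> real (card (Iback n r x - S)) \<ge> \<gamma> * real (card (Iback n r x)) \<and>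
        real (card (Ifwd n r x - S)) \<ge> \<gamma> * real (card (Ifwd n r x))" using x_good unfolding good_def .
    have "0 < z - x" using that False by simp
    hence "\<gamma> * real (card (Ifwd n (z - x) x)) \<le> real (card (Ifwd n (z - x) x - S))"
      using gg[rule_format, of "z - x"] by simp
    thus ?thesis unfolding iv using that by simp
  qed
  have gy: "\<gamma> * real t \<le> card ({y-t<..y} - S)" if "1 \<le> t" "t \<le> y" for t
  proof -
    have iv: "Iback n t y = {y-t<..y}" using that yn by (auto simp: Iback_def nodes_def)
    have gg: "\<forall>r::nat. r > 0 \<longrightarrow> real (card (Iback n r y - S)) \<ge> \<gamma> * real (card (Iback n r y)) \<and>
        real (card (Ifwd n r y - S)) \<ge> \<gamma> * real (card (Ifwd n r y))" using y_good unfolding good_def .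
    have "0 < t" using that by simp
    hence "\<gamma> * real (card (Iback n t y)) \<le> real (card (Iback n t y - S))"
      using gg[rule_format, of t] by simp
    thus ?thesis unfolding iv using that by simp
  qed
  have F: "card (D \<inter> {x<..z}) \<le> \<delta> * (real z - real x)" if "x \<le> z" "z \<le> n" for z
    using fwd[of n \<delta> R D S x \<gamma> z, OF W part xR x1 gx gd d1 d0 that] .
  show ?thesis
  proof (rule ccontr)
    assume nyR: "\<not> path_avoiding E S x y"
    hence yR: "y \<notin> R" unfolding R_def by simp
    define s where "s = (y - x + 1) div 2"
    have s1: "1 \<le> s" using xy unfolding s_def by simp
    have par: "y - x = 2*s \<or> y - x = 2*s - 1" unfolding s_def by presburger
    have sy: "s + 1 \<le> y" and sc: "s \<le> y - s" using par xy x1 s1 by auto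
    have rho: "card (R \<inter> {y-s<..y}) \<le> \<delta> * (real s - 1)"
      using bwd[of n \<delta> R D S y \<gamma> s, OF W part yR yn gy gd d2 d0 s1 sy] .
    have Bd: "\<delta> * real s \<le> card (D \<inter> {(y-s)<..(y-s)+s})"
    proof -
      have p1: "card (R \<inter> {y-s<..y}) + card (D \<inter> {y-s<..y}) = card ({y-s<..y} - S)" using part yn by simp
      hence p1r: "real (card (R \<inter> {y-s<..y})) + real (card (D \<inter> {y-s<..y})) = real (card ({y-s<..y} - S))"
        by (metis of_nat_add)
      have g: "\<gamma> * real s \<le> card ({y-s<..y} - S)" using gy s1 sy by simp
      have mm: "\<gamma> * real s \<ge> 2 * \<delta> * real s" using gd by (intro mult_right_mono) auto
      have "\<delta> * (real s - 1) = \<delta> * real s - \<delta>" by (simp add: algebra_simps)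
      hence "\<delta> * real s \<le> card (D \<inter> {y-s<..y})" using p1r g mm rho d0 by linarith
      thus ?thesis using sy by simp
    qed
    have cn: "(y - s) + s \<le> n" using sy yn by simp
    have Ad: "\<delta> * real s \<le> card (R \<inter> {(y-s)-s<..y-s})"
      using par
    proof
      assume e: "y - x = 2*s"
      have i1: "(y-s)-s = x" and i2: "y - s = x + s" using e xy by auto
      have xz: "x \<le> x + s" and zn: "x + s \<le> n" using i2 yn by auto
      have p1: "card (R \<inter> {x<..x+s}) + card (D \<inter> {x<..x+s}) = card ({x<..x+s} - S)" using part zn by simp
      hence p1r: "real (card (R \<inter> {x<..x+s})) + real (card (D \<inter> {x<..x+s})) = real (card ({x<..x+s} - S))"
        by (metis of_nat_add)
      have g: "\<gamma> * real s \<le> card ({x<..x+s} - S)" using gx[OF xz zn] by simp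
      have f: "card (D \<inter> {x<..x+s}) \<le> \<delta> * real s" using F[OF xz zn] by simp
      have mm: "\<gamma> * real s \<ge> 2 * \<delta> * real s" using gd by (intro mult_right_mono) auto
      have "\<delta> * real s \<le> card (R \<inter> {x<..x+s})" using p1r g f mm by linarith
      moreover have "{(y-s)-s<..y-s} = {x<..x+s}" using i1 i2 by simp
      ultimately show ?thesis by simp
    next
      assume e: "y - x = 2*s - 1"
      have i1: "(y-s)-s = x - 1" and i2: "y - s = x + s - 1" using e xy s1 by auto
      have xz: "x \<le> x + s - 1" and zn: "x + s - 1 \<le> n" using i2 yn s1 by auto
      have p1: "card (R \<inter> {x<..x+s-1}) + card (D \<inter> {x<..x+s-1}) = card ({x<..x+s-1} - S)" using part zn by simp
      hence p1r: "real (card (R \<inter> {x<..x+s-1})) + real (card (D \<inter> {x<..x+s-1})) = real (card ({x<..x+s-1} - S))"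
        by (metis of_nat_add)
      have zx: "real (x + s - 1) - real x = real s - 1" using s1 by simp
      have g: "\<gamma> * (real s - 1) \<le> card ({x<..x+s-1} - S)" using gx[OF xz zn] zx by simp
      have f: "card (D \<inter> {x<..x+s-1}) \<le> \<delta> * (real s - 1)" using F[OF xz zn] zx by simp
      have mm: "\<gamma> * (real s - 1) \<ge> 2 * \<delta> * (real s - 1)" using gd s1 by (intro mult_right_mono) auto
      have ci: "card (R \<inter> {x - 1<..x+s-1}) = card (R \<inter> {x<..x+s-1}) + 1"
        using card_ins_x[OF xR x1 xz] .
      have "\<delta> * (real s - 1) = \<delta> * real s - \<delta>" by (simp add: algebra_simps)
      hence "\<delta> * real s \<le> card (R \<inter> {x - 1<..x+s-1})" unfolding ci using p1r g f mm d1 by simp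
      moreover have "{(y-s)-s<..y-s} = {x - 1<..x+s-1}" using i1 i2 by simp
      ultimately show ?thesis by simp
    qed
    show False using W[OF s1 sc cn Ad Bd] .
  qed
qed

end
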